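(* Let $k$ be a positive integer and let $G$ be a graph that is not $(k+1)$-connected and has minimum degree at least $\frac{3k-1}{2}$. Then: (1) If $(S,K)\in P_0(G)$ and $(S',K')\in P(G)$ are distinct, then $K\subseteq K'$ or $(K\cup S)\cap(K'\cup S')=S\cap S'$. (2) If $(S,K),(S',K')\in P_0(G)$ are distinct, then $(K\cup S)\cap(K'\cup S')=S\cap S'$. (3) A pair $(S,K)\in P(G)$ lies in $P_0(G)$ if and only if there is no separator $S'$ of $G$ of minimum cardinality with $S'\cap K\ne\emptyset$.
   Context: Graphs are finite, simple, undirected. A graph is $k$-connected if it has more than $k$ vertices and removing any fewer than $k$ vertices leaves it connected. A separator of $G$ is a set $S\subseteq V(G)$ such that $G-S$ is disconnected. $P(G)$ is the set of pairs $(S,K)$ where $S$ is a separator of $G$ of minimum cardinality and $K\subseteq V(G)\setminus S$ is the vertex set of a connected component of $G-S$; it is partially ordered by $(S,K)\le(S',K')$ iff $K\subseteq K'$, and $P_0(G)$ denotes the set of minimal elements of $P(G)$. *)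

theory Defs
  imports Complex_Main
begin

definition graph :: "'a set \<Rightarrow> ('a \<Rightarrow> 'a \<Rightarrow> bool) \<Rightarrow> bool" where
  "graph V E \<longleftrightarrow> finite V \<and> (\<forall>x y. E x y \<longrightarrow> x \<in> V \<and> y \<in> V)
     \<and> (\<forall>x y. E x y \<longrightarrow> E y x) \<and> (\<forall>x. \<not> E x x)"

definition reach :: "('a \<Rightarrow> 'a \<Rightarrow> bool) \<Rightarrow> 'a set \<Rightarrow> 'a \<Rightarrow> 'a \<Rightarrow> bool" where
  "reach E W u v \<longleftrightarrow> u \<in> W \<and> v \<in> W \<and> (\<lambda>x y. x \<in> W \<and> y \<in> W \<and> E x y)\<^sup>*\<^sup>* u v"

definition connected_on :: "('a \<Rightarrow> 'a \<Rightarrow> bool) \<Rightarrow> 'a set \<Rightarrow> bool" where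
  "connected_on E W \<longleftrightarrow> (\<forall>u\<in>W. \<forall>v\<in>W. reach E W u v)"

definition degree :: "'a set \<Rightarrow> ('a \<Rightarrow> 'a \<Rightarrow> bool) \<Rightarrow> 'a \<Rightarrow> nat" where
  "degree V E v = card {u \<in> V. E v u}"

definition k_connected :: "'a set \<Rightarrow> ('a \<Rightarrow> 'a \<Rightarrow> bool) \<Rightarrow> nat \<Rightarrow> bool" where
  "k_connected V E k \<longleftrightarrow> card V > k \<and>
     (\<forall>X. X \<subseteq> V \<and> card X < k \<longrightarrow> connected_on E (V - X))"

definition separator :: "'a set \<Rightarrow> ('a \<Rightarrow> 'a \<Rightarrow> bool) \<Rightarrow> 'a set \<Rightarrow> bool" where
  "separator V E S \<longleftrightarrow> S \<subseteq> V \<and> \<not> connected_on E (V - S)"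

definition min_separator :: "'a set \<Rightarrow> ('a \<Rightarrow> 'a \<Rightarrow> bool) \<Rightarrow> 'a set \<Rightarrow> bool" where
  "min_separator V E S \<longleftrightarrow> separator V E S \<and> (\<forall>T. separator V E T \<longrightarrow> card S \<le> card T)"

definition component :: "('a \<Rightarrow> 'a \<Rightarrow> bool) \<Rightarrow> 'a set \<Rightarrow> 'a set \<Rightarrow> bool" where
  "component E W K \<longleftrightarrow> (\<exists>u\<in>W. K = {v. reach E W u v})"

definition P :: "'a set \<Rightarrow> ('a \<Rightarrow> 'a \<Rightarrow> bool) \<Rightarrow> ('a set \<times> 'a set) set" where
  "P V E = {(S, K). min_separator V E S \<and> component E (V - S) K}"

definition P0 :: "'a set \<Rightarrow> ('a \<Rightarrow> 'a \<Rightarrow> bool) \<Rightarrow> ('a set \<times> 'a set) set" where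
  "P0 V E = {(S, K). (S, K) \<in> P V E \<and>
     (\<forall>S' K'. (S', K') \<in> P V E \<and> K' \<subseteq> K \<longrightarrow> (S', K') = (S, K))}"

end

theory Submission
  imports Defs
begin

definition closedS :: "'a set \<Rightarrow> ('a \<Rightarrow> 'a \<Rightarrow> bool) \<Rightarrow> 'a set \<Rightarrow> 'a set \<Rightarrow> bool" where
  "closedS V E T X \<longleftrightarrow> X \<subseteq> V - T \<and> (\<forall>x\<in>X. \<forall>y. E x y \<longrightarrow> y \<in> X \<union> T)"

lemma reach_closed:
  assumes "reach E W u v" "u \<in> C" "C \<subseteq> W" "\<forall>x\<in>C. \<forall>y\<in>W. E x y \<longrightarrow> y \<in> C"
  shows "reach E C u v"
proof -
  let ?R = "\<lambda>x y. x \<in> W \<and> y \<in> W \<and> E x y"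
  let ?Q = "\<lambda>x y. x \<in> C \<and> y \<in> C \<and> E x y"
  have "?R\<^sup>*\<^sup>* u v" using assms(1) unfolding reach_def by blast
  then have "?Q\<^sup>*\<^sup>* u v \<and> v \<in> C"
  proof (induction rule: rtranclp_induct)
    case base then show ?case using assms(2) by simp
  next
    case (step y z)
    then have z: "z \<in> C" using assms(4) by blast
    have q: "?Q y z" using step z by blast
    have "?Q\<^sup>*\<^sup>* u y" using step by blast
    then have "?Q\<^sup>*\<^sup>* u z" using q by (rule rtranclp.rtrancl_into_rtrancl)
    then show ?case using z by blast
  qed
  then show ?thesis using assms(2) unfolding reach_def by blast
qed

lemma reach_closed_mem:
  assumes "reach E W u v" "u \<in> C" "C \<subseteq> W" "\<forall>x\<in>C. \<forall>y\<in>W. E x y \<longrightarrow> y \<in> C"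
  shows "v \<in> C"
  using reach_closed[OF assms] unfolding reach_def by blast

lemma reach_mono:
  assumes "reach E W u v" "W \<subseteq> W'"
  shows "reach E W' u v"
proof -
  let ?R = "\<lambda>x y. x \<in> W \<and> y \<in> W \<and> E x y"
  let ?Q = "\<lambda>x y. x \<in> W' \<and> y \<in> W' \<and> E x y"
  have "?R\<^sup>*\<^sup>* u v" using assms(1) unfolding reach_def by blast
  then have "?Q\<^sup>*\<^sup>* u v"
  proof (induction rule: rtranclp_induct)
    case base then show ?case by simp
  next
    case (step y z)
    then have q: "?Q y z" using assms(2) by blast
    have "?Q\<^sup>*\<^sup>* u y" using step by blast
    then show ?case using q by (rule rtranclp.rtrancl_into_rtrancl)
  qed
  then show ?thesis using assms unfolding reach_def by blast
qed

lemma reach_refl: "u \<in> W \<Longrightarrow> reach E W u u"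
  unfolding reach_def by simp

lemma reach_trans: "reach E W u v \<Longrightarrow> reach E W v w \<Longrightarrow> reach E W u w"
  unfolding reach_def by (meson rtranclp_trans)

lemma reach_sym:
  assumes G: "graph V E" and r: "reach E W u v"
  shows "reach E W v u"
proof -
  let ?R = "\<lambda>x y. x \<in> W \<and> y \<in> W \<and> E x y"
  have "?R\<^sup>*\<^sup>* u v" using r unfolding reach_def by blast
  then have "?R\<^sup>*\<^sup>* v u"
  proof (induction rule: rtranclp_induct)
    case base then show ?case by simp
  next
    case (step y z)
    then have q: "?R z y" using G unfolding graph_def by blast
    have "?R\<^sup>*\<^sup>* y u" using step by blast
    with q show ?case by (rule converse_rtranclp_into_rtranclp)
  qed
  then show ?thesis using r unfolding reach_def by blast
qed

lemma comp_of: "u \<in> W \<Longrightarrow> component E W {v. reach E W u v}"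
  unfolding component_def by blast

lemma comp_props:
  assumes G: "graph V E" and c: "component E W K"
  shows "K \<subseteq> W" "K \<noteq> {}" "\<forall>x\<in>K. \<forall>y\<in>W. E x y \<longrightarrow> y \<in> K"
    "\<forall>v\<in>K. \<forall>w\<in>K. reach E W v w"
proof -
  obtain u where u: "u \<in> W" "K = {v. reach E W u v}" using c unfolding component_def by blast
  show "K \<subseteq> W" using u unfolding reach_def by blast
  have "u \<in> K" using u reach_refl[of u W E] by simp
  then show "K \<noteq> {}" by blast
  show "\<forall>x\<in>K. \<forall>y\<in>W. E x y \<longrightarrow> y \<in> K"
  proof (intro ballI impI)
    fix x y assume x: "x \<in> K" and y: "y \<in> W" and e: "E x y"
    have ux: "reach E W u x" using x u by simp
    then have "x \<in> W" unfolding reach_def by simp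
    then have "reach E W x y" using y e unfolding reach_def by auto
    then have "reach E W u y" using ux reach_trans by metis
    then show "y \<in> K" using u by simp
  qed
  show "\<forall>v\<in>K. \<forall>w\<in>K. reach E W v w"
  proof (intro ballI)
    fix v w assume "v \<in> K" "w \<in> K"
    then have "reach E W u v" "reach E W u w" using u by simp_all
    then show "reach E W v w" using reach_trans reach_sym[OF G] by metis
  qed
qed

lemma sep_of_closed:
  assumes G: "graph V E" and cl: "closedS V E T C" and ne: "C \<noteq> {}" and T: "T \<subseteq> V"
    and out: "V - T - C \<noteq> {}"
  shows "separator V E T"
proof -
  obtain u where u: "u \<in> C" using ne by blast
  obtain w where w: "w \<in> V - T - C" using out by blast
  have "\<not> reach E (V - T) u w"
  proof
    assume "reach E (V - T) u w"
    then have "w \<in> C" by (rule reach_closed_mem) (use u cl in \<open>auto simp: closedS_def\<close>)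
    then show False using w by blast
  qed
  then show ?thesis unfolding separator_def connected_on_def using T u w cl
    by (auto simp: closedS_def)
qed

lemma min_card_eq: "min_separator V E S \<Longrightarrow> min_separator V E S' \<Longrightarrow> card S = card S'"
  unfolding min_separator_def by (simp add: le_antisym)

lemma P_facts:
  assumes G: "graph V E" and p: "(S, K) \<in> P V E"
  shows "min_separator V E S" "S \<subseteq> V" "closedS V E S K" "K \<noteq> {}"
    "closedS V E S (V - S - K)" "V - S - K \<noteq> {}" "component E (V - S) K"
proof -
  show ms: "min_separator V E S" and c: "component E (V - S) K" using p by (auto simp: P_def)
  show SV: "S \<subseteq> V" using ms by (simp add: min_separator_def separator_def)
  note cp = comp_props[OF G c]
  show "K \<noteq> {}" using cp by blast
  show clK: "closedS V E S K" unfolding closedS_def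
  proof (intro conjI ballI allI impI)
    show "K \<subseteq> V - S" using cp by blast
    fix x y assume "x \<in> K" "E x y"
    then have "y \<in> V" using G unfolding graph_def by blast
    then show "y \<in> K \<union> S" using cp \<open>x \<in> K\<close> \<open>E x y\<close> by blast
  qed
  show "closedS V E S (V - S - K)" unfolding closedS_def
  proof (intro conjI ballI allI impI)
    show "V - S - K \<subseteq> V - S" by blast
    fix x y assume x: "x \<in> V - S - K" and e: "E x y"
    then have "y \<in> V" "E y x" using G unfolding graph_def by blast+
    then show "y \<in> V - S - K \<union> S" using cp x by blast
  qed
  show "V - S - K \<noteq> {}"
  proof
    assume "V - S - K = {}"
    then have "connected_on E (V - S)" using cp unfolding connected_on_def by blast
    then show False using ms by (simp add: min_separator_def separator_def)
  qed
qed

lemma card3: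
  assumes "finite A" "finite B" "finite C" "A \<inter> B = {}" "A \<inter> C = {}" "B \<inter> C = {}"
  shows "card (A \<union> B \<union> C) = card A + card B + card C"
  using assms by (simp add: card_Un_disjoint Int_Un_distrib2)

lemma size_side:
  assumes G: "graph V E" and deg: "\<forall>v\<in>V. 3 * k \<le> 2 * degree V E v + 1"
    and Tk: "card T \<le> k" and cl: "closedS V E T X" and ne: "X \<noteq> {}" and T: "T \<subseteq> V"
  shows "card T + 1 \<le> 2 * card X"
proof -
  have fin: "finite V" using G by (simp add: graph_def)
  obtain x where x: "x \<in> X" using ne by blast
  have XV: "X \<subseteq> V" using cl by (auto simp: closedS_def)
  have "{u \<in> V. E x u} \<subseteq> (X - {x}) \<union> T"
    using cl x G unfolding closedS_def graph_def by blast
  then have "degree V E x \<le> card ((X - {x}) \<union> T)"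
    unfolding degree_def using fin XV T by (intro card_mono) (auto intro: finite_subset)
  also have "\<dots> \<le> card (X - {x}) + card T" by (rule card_Un_le)
  also have "card (X - {x}) = card X - 1" using x by simp
  finally have d: "degree V E x \<le> card X - 1 + card T" .
  have "card X \<ge> 1" using x fin XV by (metis One_nat_def Suc_leI card_gt_0_iff finite_subset ne)
  moreover have "3 * k \<le> 2 * degree V E x + 1" using deg x XV by blast
  ultimately show ?thesis using d Tk by linarith
qed


lemma p0_contra:
  assumes G: "graph V E" and P0: "(S, K) \<in> P0 V E" and cl: "closedS V E A C"
    and ne: "C \<noteq> {}" and CK: "C \<subseteq> K" and CnK: "C \<noteq> K" and A: "A \<subseteq> V"
    and out: "V - A - C \<noteq> {}" and cA: "card A = card S"
  shows False
proof -
  have p: "(S, K) \<in> P V E" and mini: "\<And>S' K'. (S', K') \<in> P V E \<Longrightarrow> K' \<subseteq> K \<Longrightarrow> (S', K') = (S, K)"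
    using P0 unfolding P0_def by blast+
  have sepA: "separator V E A" by (rule sep_of_closed[OF G cl ne A out])
  have msS: "min_separator V E S" using P_facts[OF G p] by blast
  have msA: "min_separator V E A" using sepA msS cA unfolding min_separator_def by simp
  obtain u where u: "u \<in> C" using ne by blast
  define D where "D = {v. reach E (V - A) u v}"
  have uW: "u \<in> V - A" using cl u by (auto simp: closedS_def)
  have compD: "component E (V - A) D" unfolding D_def by (rule comp_of[OF uW])
  have DC: "D \<subseteq> C"
  proof
    fix v assume "v \<in> D"
    then have r: "reach E (V - A) u v" by (simp add: D_def)
    show "v \<in> C"
      by (rule reach_closed_mem[OF r u]) (use cl in \<open>auto simp: closedS_def\<close>)
  qed
  have "(A, D) \<in> P V E" using msA compD by (simp add: P_def)
  then have "(A, D) = (S, K)" using mini DC CK by blast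
  then show False using DC CK CnK by blast
qed

lemma kappa_le:
  assumes G: "graph V E" and nk: "\<not> k_connected V E (k+1)" and ms: "min_separator V E S"
  shows "card S \<le> k"
proof (cases "card V > k+1")
  case True
  then obtain X where X: "X \<subseteq> V" "card X < k+1" "\<not> connected_on E (V - X)"
    using nk unfolding k_connected_def by auto
  then have "separator V E X" by (simp add: separator_def)
  then have "card S \<le> card X" using ms unfolding min_separator_def by blast
  then show ?thesis using X by linarith
next
  case False
  have SV: "S \<subseteq> V" and nc: "\<not> connected_on E (V - S)"
    using ms by (auto simp: min_separator_def separator_def)
  then obtain u v where uv: "u \<in> V - S" "v \<in> V - S" "\<not> reach E (V - S) u v"
    unfolding connected_on_def by blast
  have "u \<noteq> v" using uv reach_refl by metis
  have fin: "finite V" using G by (simp add: graph_def)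
  have "S \<union> {u, v} \<subseteq> V" using SV uv by blast
  then have "card (S \<union> {u, v}) \<le> card V" using fin by (rule card_mono[rotated])
  moreover have "card (S \<union> {u, v}) = card S + 2"
    using uv \<open>u \<noteq> v\<close> fin SV by (simp add: card_Un_disjoint finite_subset)
  ultimately show ?thesis using False by linarith
qed

lemma corner:
  assumes G: "graph V E" and clX: "closedS V E S X" and clX': "closedS V E S' X'"
    and Y: "Y \<noteq> {}" "Y \<inter> X = {}" "Y \<inter> S = {}" "Y \<subseteq> V" and SV: "S \<subseteq> V" "S' \<subseteq> V"
  shows "closedS V E ((X \<inter> S') \<union> (S \<inter> S') \<union> (S \<inter> X')) (X \<inter> X')"
    "V - ((X \<inter> S') \<union> (S \<inter> S') \<union> (S \<inter> X')) - (X \<inter> X') \<noteq> {}"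
    "card ((X \<inter> S') \<union> (S \<inter> S') \<union> (S \<inter> X')) = card (X \<inter> S') + card (S \<inter> S') + card (S \<inter> X')"
    "(X \<inter> S') \<union> (S \<inter> S') \<union> (S \<inter> X') \<subseteq> V"
    "X \<inter> X' \<noteq> {} \<Longrightarrow> separator V E ((X \<inter> S') \<union> (S \<inter> S') \<union> (S \<inter> X'))"
proof -
  have fin: "finite V" using G by (simp add: graph_def)
  have XV: "X \<subseteq> V - S" "X' \<subseteq> V - S'" using clX clX' by (auto simp: closedS_def)
  show cl: "closedS V E ((X \<inter> S') \<union> (S \<inter> S') \<union> (S \<inter> X')) (X \<inter> X')"
    using clX clX' unfolding closedS_def by blast
  show out: "V - ((X \<inter> S') \<union> (S \<inter> S') \<union> (S \<inter> X')) - (X \<inter> X') \<noteq> {}"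
    using Y by blast
  show "card ((X \<inter> S') \<union> (S \<inter> S') \<union> (S \<inter> X')) = card (X \<inter> S') + card (S \<inter> S') + card (S \<inter> X')"
    by (rule card3) (use fin SV XV in \<open>auto intro: finite_subset\<close>)
  show AV: "(X \<inter> S') \<union> (S \<inter> S') \<union> (S \<inter> X') \<subseteq> V" using SV by blast
  show "X \<inter> X' \<noteq> {} \<Longrightarrow> separator V E ((X \<inter> S') \<union> (S \<inter> S') \<union> (S \<inter> X'))"
    using sep_of_closed[OF G cl _ AV out] by blast
qed

lemma arith1:
  fixes a b c d e \<kappa> :: nat and C2 C3 C4 :: bool
  assumes "\<kappa> = c+b+d" "\<kappa> = a+b+e" "\<kappa> \<le> a+b+c" "a+b+c \<noteq> \<kappa>"
   "C2 \<Longrightarrow> \<kappa> \<le> a+b+d" "C3 \<Longrightarrow> \<kappa> \<le> e+b+c" "C4 \<Longrightarrow> \<kappa> \<le> e+b+d"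
   "C2 \<Longrightarrow> C3 \<Longrightarrow> a+b+d \<noteq> \<kappa>"
   "\<not>C3 \<Longrightarrow> \<not>C4 \<Longrightarrow> \<kappa>+1 \<le> 2*e" "\<not>C2 \<Longrightarrow> \<not>C4 \<Longrightarrow> \<kappa>+1 \<le> 2*d"
  shows False
  using assms by (cases C2; cases C3; cases C4) auto

lemma arith2:
  fixes a b c d e \<kappa> :: nat and C3 C4 :: bool
  assumes "\<kappa> = c+b+d" "\<kappa> = a+b+e" "\<kappa>+1 \<le> 2*a"
   "C3 \<Longrightarrow> \<kappa> \<le> e+b+c" "C4 \<Longrightarrow> \<kappa> \<le> e+b+d"
   "\<not>C3 \<Longrightarrow> \<kappa>+1 \<le> 2*c" "\<not>C3 \<Longrightarrow> \<not>C4 \<Longrightarrow> \<kappa>+1 \<le> 2*e"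
   "\<not>C4 \<Longrightarrow> \<kappa>+1 \<le> 2*d"
  shows False
  using assms by (cases C3; cases C4) auto


lemma csetup:
  assumes G: "graph V E" and deg: "\<forall>v\<in>V. 3 * k \<le> 2 * degree V E v + 1"
    and k1: "\<forall>T. min_separator V E T \<longrightarrow> card T \<le> k"
    and p: "(S, K) \<in> P V E" and p': "(S', K') \<in> P V E"
  defines "L \<equiv> V - S - K" and "L' \<equiv> V - S' - K'"
  shows "card S = card (S \<inter> K') + card (S \<inter> S') + card (S \<inter> L')"
    "card S = card (K \<inter> S') + card (S \<inter> S') + card (L \<inter> S')"
    "K \<inter> K' \<noteq> {} \<Longrightarrow> card S \<le> card (K \<inter> S') + card (S \<inter> S') + card (S \<inter> K')"
    "K \<inter> L' \<noteq> {} \<Longrightarrow> card S \<le> card (K \<inter> S') + card (S \<inter> S') + card (S \<inter> L')"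
    "L \<inter> K' \<noteq> {} \<Longrightarrow> card S \<le> card (L \<inter> S') + card (S \<inter> S') + card (S \<inter> K')"
    "L \<inter> L' \<noteq> {} \<Longrightarrow> card S \<le> card (L \<inter> S') + card (S \<inter> S') + card (S \<inter> L')"
    "K \<inter> K' = {} \<Longrightarrow> K \<inter> L' = {} \<Longrightarrow> card S + 1 \<le> 2 * card (K \<inter> S')"
    "L \<inter> K' = {} \<Longrightarrow> L \<inter> L' = {} \<Longrightarrow> card S + 1 \<le> 2 * card (L \<inter> S')"
    "K \<inter> K' = {} \<Longrightarrow> L \<inter> K' = {} \<Longrightarrow> card S + 1 \<le> 2 * card (S \<inter> K')"
    "K \<inter> L' = {} \<Longrightarrow> L \<inter> L' = {} \<Longrightarrow> card S + 1 \<le> 2 * card (S \<inter> L')"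
    "closedS V E ((K \<inter> S') \<union> (S \<inter> S') \<union> (S \<inter> K')) (K \<inter> K')"
    "V - ((K \<inter> S') \<union> (S \<inter> S') \<union> (S \<inter> K')) - (K \<inter> K') \<noteq> {}"
    "card ((K \<inter> S') \<union> (S \<inter> S') \<union> (S \<inter> K')) = card (K \<inter> S') + card (S \<inter> S') + card (S \<inter> K')"
    "(K \<inter> S') \<union> (S \<inter> S') \<union> (S \<inter> K') \<subseteq> V"
    "closedS V E ((K \<inter> S') \<union> (S \<inter> S') \<union> (S \<inter> L')) (K \<inter> L')"
    "V - ((K \<inter> S') \<union> (S \<inter> S') \<union> (S \<inter> L')) - (K \<inter> L') \<noteq> {}"
    "card ((K \<inter> S') \<union> (S \<inter> S') \<union> (S \<inter> L')) = card (K \<inter> S') + card (S \<inter> S') + card (S \<inter> L')"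
    "(K \<inter> S') \<union> (S \<inter> S') \<union> (S \<inter> L') \<subseteq> V"
proof -
  have fin: "finite V" using G by (simp add: graph_def)
  note f = P_facts[OF G p] and f' = P_facts[OF G p']
  have msS: "min_separator V E S" and msS': "min_separator V E S'" using f f' by blast+
  have cS: "card S' = card S" using min_card_eq[OF msS' msS] .
  have SV: "S \<subseteq> V" and SV': "S' \<subseteq> V" using f f' by blast+
  have clK: "closedS V E S K" and clL: "closedS V E S L" and clK': "closedS V E S' K'"
    and clL': "closedS V E S' L'" using f f' by (simp_all add: L_def L'_def)
  have neK: "K \<noteq> {}" and neL: "L \<noteq> {}" and neK': "K' \<noteq> {}" and neL': "L' \<noteq> {}"
    using f f' by (simp_all add: L_def L'_def)
  have KV: "K \<subseteq> V - S" "K' \<subseteq> V - S'" using clK clK' by (auto simp: closedS_def)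
  have kS: "card S \<le> k" "card S' \<le> k" using k1 msS msS' by blast+
  show "card S = card (S \<inter> K') + card (S \<inter> S') + card (S \<inter> L')"
  proof -
    have "S = (S \<inter> K') \<union> (S \<inter> S') \<union> (S \<inter> L')" using SV by (auto simp: L'_def)
    also have "card \<dots> = card (S \<inter> K') + card (S \<inter> S') + card (S \<inter> L')"
      by (rule card3) (use fin SV KV in \<open>auto simp: L'_def intro: finite_subset\<close>)
    finally show ?thesis .
  qed
  show "card S = card (K \<inter> S') + card (S \<inter> S') + card (L \<inter> S')"
  proof -
    have "S' = (K \<inter> S') \<union> (S \<inter> S') \<union> (L \<inter> S')" using SV' by (auto simp: L_def)
    also have "card \<dots> = card (K \<inter> S') + card (S \<inter> S') + card (L \<inter> S')"
      by (rule card3) (use fin SV' KV in \<open>auto simp: L_def intro: finite_subset\<close>)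
    finally show ?thesis using cS by simp
  qed
  have LY: "L \<inter> K = {}" "L \<inter> S = {}" "L \<subseteq> V" by (auto simp: L_def)
  have KY: "K \<inter> L = {}" "K \<inter> S = {}" "K \<subseteq> V" using KV by (auto simp: L_def)
  note c1 = corner[OF G clK clK' neL LY SV SV']
  note c2 = corner[OF G clK clL' neL LY SV SV']
  note c3 = corner[OF G clL clK' neK KY SV SV']
  note c4 = corner[OF G clL clL' neK KY SV SV']
  have sep: "separator V E T \<Longrightarrow> card S \<le> card T" for T using msS by (simp add: min_separator_def)
  show "K \<inter> K' \<noteq> {} \<Longrightarrow> card S \<le> card (K \<inter> S') + card (S \<inter> S') + card (S \<inter> K')"
    using c1 sep by metis
  show "K \<inter> L' \<noteq> {} \<Longrightarrow> card S \<le> card (K \<inter> S') + card (S \<inter> S') + card (S \<inter> L')"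
    using c2 sep by metis
  show "L \<inter> K' \<noteq> {} \<Longrightarrow> card S \<le> card (L \<inter> S') + card (S \<inter> S') + card (S \<inter> K')"
    using c3 sep by metis
  show "L \<inter> L' \<noteq> {} \<Longrightarrow> card S \<le> card (L \<inter> S') + card (S \<inter> S') + card (S \<inter> L')"
    using c4 sep by metis
  show "K \<inter> K' = {} \<Longrightarrow> K \<inter> L' = {} \<Longrightarrow> card S + 1 \<le> 2 * card (K \<inter> S')"
  proof -
    assume "K \<inter> K' = {}" "K \<inter> L' = {}"
    then have "K \<subseteq> K \<inter> S'" using KV by (auto simp: L'_def)
    then have "card K \<le> card (K \<inter> S')" using fin KV by (intro card_mono) (auto intro: finite_subset)
    moreover have "card S + 1 \<le> 2 * card K" by (rule size_side[OF G deg kS(1) clK neK SV])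
    ultimately show ?thesis by linarith
  qed
  show "L \<inter> K' = {} \<Longrightarrow> L \<inter> L' = {} \<Longrightarrow> card S + 1 \<le> 2 * card (L \<inter> S')"
  proof -
    assume "L \<inter> K' = {}" "L \<inter> L' = {}"
    then have "L \<subseteq> L \<inter> S'" using LY by (auto simp: L'_def)
    then have "card L \<le> card (L \<inter> S')" using fin LY by (intro card_mono) (auto intro: finite_subset)
    moreover have "card S + 1 \<le> 2 * card L" by (rule size_side[OF G deg kS(1) clL neL SV])
    ultimately show ?thesis by linarith
  qed
  show "K \<inter> K' = {} \<Longrightarrow> L \<inter> K' = {} \<Longrightarrow> card S + 1 \<le> 2 * card (S \<inter> K')"
  proof -
    assume "K \<inter> K' = {}" "L \<inter> K' = {}"
    then have "K' \<subseteq> S \<inter> K'" using KV by (auto simp: L_def)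
    then have "card K' \<le> card (S \<inter> K')" using fin KV by (intro card_mono) (auto intro: finite_subset)
    moreover have "card S' + 1 \<le> 2 * card K'" by (rule size_side[OF G deg kS(2) clK' neK' SV'])
    ultimately show ?thesis using cS by linarith
  qed
  show "K \<inter> L' = {} \<Longrightarrow> L \<inter> L' = {} \<Longrightarrow> card S + 1 \<le> 2 * card (S \<inter> L')"
  proof -
    assume "K \<inter> L' = {}" "L \<inter> L' = {}"
    then have "L' \<subseteq> S \<inter> L'" by (auto simp: L_def L'_def)
    then have "card L' \<le> card (S \<inter> L')" using fin SV by (intro card_mono) (auto intro: finite_subset)
    moreover have "card S' + 1 \<le> 2 * card L'" by (rule size_side[OF G deg kS(2) clL' neL' SV'])
    ultimately show ?thesis using cS by linarith
  qed
  show "closedS V E ((K \<inter> S') \<union> (S \<inter> S') \<union> (S \<inter> K')) (K \<inter> K')"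
    "V - ((K \<inter> S') \<union> (S \<inter> S') \<union> (S \<inter> K')) - (K \<inter> K') \<noteq> {}"
    "card ((K \<inter> S') \<union> (S \<inter> S') \<union> (S \<inter> K')) = card (K \<inter> S') + card (S \<inter> S') + card (S \<inter> K')"
    "(K \<inter> S') \<union> (S \<inter> S') \<union> (S \<inter> K') \<subseteq> V" using c1 by blast+
  show "closedS V E ((K \<inter> S') \<union> (S \<inter> S') \<union> (S \<inter> L')) (K \<inter> L')"
    "V - ((K \<inter> S') \<union> (S \<inter> S') \<union> (S \<inter> L')) - (K \<inter> L') \<noteq> {}"
    "card ((K \<inter> S') \<union> (S \<inter> S') \<union> (S \<inter> L')) = card (K \<inter> S') + card (S \<inter> S') + card (S \<inter> L')"
    "(K \<inter> S') \<union> (S \<inter> S') \<union> (S \<inter> L') \<subseteq> V" using c2 by blast+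
qed


lemma meet:
  assumes G: "graph V E" and deg: "\<forall>v\<in>V. 3 * k \<le> 2 * degree V E v + 1"
    and k1: "\<forall>T. min_separator V E T \<longrightarrow> card T \<le> k"
    and P0: "(S, K) \<in> P0 V E" and p': "(S', K') \<in> P V E" and ne: "K \<inter> K' \<noteq> {}"
  shows "K \<subseteq> K'"
proof (rule ccontr)
  assume nsub: "\<not> K \<subseteq> K'"
  have p: "(S, K) \<in> P V E" using P0 by (simp add: P0_def)
  define L where "L = V - S - K"
  define L' where "L' = V - S' - K'"
  note st = csetup[OF G deg k1 p p', folded L_def L'_def]
  define a where "a = card (K \<inter> S')"
  define b where "b = card (S \<inter> S')"
  define c where "c = card (S \<inter> K')"
  define d where "d = card (S \<inter> L')"
  define e where "e = card (L \<inter> S')"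
  define \<kappa> where "\<kappa> = card S"
  note st' = st[folded a_def b_def c_def d_def e_def \<kappa>_def]
  have h4: "a + b + c \<noteq> \<kappa>"
  proof
    assume eq: "a + b + c = \<kappa>"
    show False
      by (rule p0_contra[OF G P0 st(11) ne _ _ st(14) st(12)])
         (use nsub eq st'(13) in \<open>auto simp: a_def b_def c_def \<kappa>_def\<close>)
  qed
  have h8: "a + b + d \<noteq> \<kappa>" if ne2: "K \<inter> L' \<noteq> {}" "L \<inter> K' \<noteq> {}"
  proof
    assume eq: "a + b + d = \<kappa>"
    have nK: "K \<inter> L' \<noteq> K" using ne by (auto simp: L'_def)
    show False
      by (rule p0_contra[OF G P0 st(15) ne2(1) _ _ st(18) st(16)])
         (use nK eq st'(17) in \<open>auto simp: a_def b_def d_def \<kappa>_def\<close>)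
  qed
  show False
  proof (rule arith1[of \<kappa> c b d a e "K \<inter> L' \<noteq> {}" "L \<inter> K' \<noteq> {}" "L \<inter> L' \<noteq> {}"])
    show "\<kappa> = c + b + d" using st'(1) .
    show "\<kappa> = a + b + e" using st'(2) by simp
    show "\<kappa> \<le> a + b + c" using st'(3) ne .
    show "a + b + c \<noteq> \<kappa>" by (rule h4)
    show "K \<inter> L' \<noteq> {} \<Longrightarrow> \<kappa> \<le> a + b + d" using st'(4) .
    show "L \<inter> K' \<noteq> {} \<Longrightarrow> \<kappa> \<le> e + b + c" using st'(5) .
    show "L \<inter> L' \<noteq> {} \<Longrightarrow> \<kappa> \<le> e + b + d" using st'(6) .
    show "K \<inter> L' \<noteq> {} \<Longrightarrow> L \<inter> K' \<noteq> {} \<Longrightarrow> a + b + d \<noteq> \<kappa>" by (rule h8)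
    show "\<not> L \<inter> K' \<noteq> {} \<Longrightarrow> \<not> L \<inter> L' \<noteq> {} \<Longrightarrow> \<kappa> + 1 \<le> 2 * e" using st'(8) by blast
    show "\<not> K \<inter> L' \<noteq> {} \<Longrightarrow> \<not> L \<inter> L' \<noteq> {} \<Longrightarrow> \<kappa> + 1 \<le> 2 * d" using st'(10) by blast
  qed
qed

lemma part1:
  assumes G: "graph V E" and deg: "\<forall>v\<in>V. 3 * k \<le> 2 * degree V E v + 1"
    and k1: "\<forall>T. min_separator V E T \<longrightarrow> card T \<le> k"
    and P0: "(S, K) \<in> P0 V E" and p': "(S', K') \<in> P V E"
  shows "K \<subseteq> K' \<or> (K \<union> S) \<inter> (K' \<union> S') = S \<inter> S'"
proof (cases "K \<inter> K' = {}")
  case False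
  then show ?thesis using meet[OF G deg k1 P0 p'] by blast
next
  case C1: True
  have p: "(S, K) \<in> P V E" using P0 by (simp add: P0_def)
  have fin: "finite V" using G by (simp add: graph_def)
  define L where "L = V - S - K"
  define L' where "L' = V - S' - K'"
  note st = csetup[OF G deg k1 p p', folded L_def L'_def]
  note f = P_facts[OF G p] and f' = P_facts[OF G p']
  show ?thesis
  proof (cases "K \<inter> L' = {}")
    case C2: True
    define a where "a = card (K \<inter> S')"
    define b where "b = card (S \<inter> S')"
    define c where "c = card (S \<inter> K')"
    define d where "d = card (S \<inter> L')"
    define e where "e = card (L \<inter> S')"
    define \<kappa> where "\<kappa> = card S"
    note st' = st[folded a_def b_def c_def d_def e_def \<kappa>_def]
    have False
    proof (rule arith2[of \<kappa> c b d a e "L \<inter> K' \<noteq> {}" "L \<inter> L' \<noteq> {}"])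
      show "\<kappa> = c + b + d" using st'(1) .
      show "\<kappa> = a + b + e" using st'(2) by simp
      show "\<kappa> + 1 \<le> 2 * a" using st'(7) C1 C2 .
      show "L \<inter> K' \<noteq> {} \<Longrightarrow> \<kappa> \<le> e + b + c" using st'(5) .
      show "L \<inter> L' \<noteq> {} \<Longrightarrow> \<kappa> \<le> e + b + d" using st'(6) .
      show "\<not> L \<inter> K' \<noteq> {} \<Longrightarrow> \<kappa> + 1 \<le> 2 * c" using st'(9) C1 by blast
      show "\<not> L \<inter> K' \<noteq> {} \<Longrightarrow> \<not> L \<inter> L' \<noteq> {} \<Longrightarrow> \<kappa> + 1 \<le> 2 * e" using st'(8) by blast
      show "\<not> L \<inter> L' \<noteq> {} \<Longrightarrow> \<kappa> + 1 \<le> 2 * d" using st'(10) C2 by blast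
    qed
    then show ?thesis ..
  next
    case C2: False
    then obtain u where u: "u \<in> K \<inter> L'" by blast
    have uW: "u \<in> V - S'" using u by (simp add: L'_def)
    define M where "M = {v. reach E (V - S') u v}"
    have compM: "component E (V - S') M" unfolding M_def by (rule comp_of[OF uW])
    have msS': "min_separator V E S'" using f' by blast
    have pM: "(S', M) \<in> P V E" using msS' compM by (simp add: P_def)
    have clL': "closedS V E S' L'" using f' by (simp add: L'_def)
    have MsubL: "M \<subseteq> L'"
    proof
      fix v assume "v \<in> M"
      then have r: "reach E (V - S') u v" by (simp add: M_def)
      show "v \<in> L'"
        by (rule reach_closed_mem[OF r]) (use u clL' in \<open>auto simp: closedS_def\<close>)
    qed
    have "u \<in> M" using uW reach_refl by (simp add: M_def reach_refl)
    then have "K \<inter> M \<noteq> {}" using u by blast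
    then have "K \<subseteq> M" by (rule meet[OF G deg k1 P0 pM])
    then have KL': "K \<subseteq> L'" using MsubL by blast
    then have KS': "K \<inter> S' = {}" by (auto simp: L'_def)
    have "card S \<le> card (S \<inter> S') + card (S \<inter> L')" using st(4) C2 KS' by simp
    then have "card (S \<inter> K') = 0" using st(1) by linarith
    moreover have "finite (S \<inter> K')" using fin f by (auto intro: finite_subset)
    ultimately have "S \<inter> K' = {}" by simp
    then show ?thesis using C1 KS' by blast
  qed
qed

lemma nbr_eq:
  assumes G: "graph V E" and p: "(T, K) \<in> P V E"
  shows "T = {y. \<exists>x\<in>K. E x y} - K"
proof -
  note f = P_facts[OF G p]
  define N where "N = {y. \<exists>x\<in>K. E x y} - K"
  have fin: "finite V" using G by (simp add: graph_def)
  have NT: "N \<subseteq> T" using f(3) unfolding N_def closedS_def by blast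
  have NV: "N \<subseteq> V" using G unfolding N_def graph_def by blast
  have cl: "closedS V E N K" using f(3) unfolding closedS_def N_def by blast
  have out: "V - N - K \<noteq> {}" using f(6) NT by blast
  have "separator V E N" by (rule sep_of_closed[OF G cl f(4) NV out])
  then have "card T \<le> card N" using f(1) by (simp add: min_separator_def)
  moreover have "finite T" using fin f(2) by (auto intro: finite_subset)
  ultimately have "N = T" using NT by (metis card_subset_eq card_mono antisym)
  then show ?thesis by (simp add: N_def)
qed

lemma part3b:
  assumes G: "graph V E" and p: "(S, K) \<in> P V E"
    and no: "\<not> (\<exists>S'. min_separator V E S' \<and> S' \<inter> K \<noteq> {})"
  shows "(S, K) \<in> P0 V E"
  unfolding P0_def
proof (clarsimp simp: p)
  fix S' K' assume p': "(S', K') \<in> P V E" and sub: "K' \<subseteq> K"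
  note f = P_facts[OF G p] and f' = P_facts[OF G p']
  have dis: "S' \<inter> K = {}" using no f'(1) by blast
  obtain u' where u': "u' \<in> K'" using f'(4) by blast
  note cp = comp_props[OF G f(7)] and cp' = comp_props[OF G f'(7)]
  have "K \<subseteq> K'"
  proof
    fix v assume v: "v \<in> K"
    have "reach E (V - S) u' v" using cp(4) u' sub v by blast
    then have "reach E K u' v" by (rule reach_closed) (use u' sub cp in blast)+
    then have r: "reach E (V - S') u' v" by (rule reach_mono) (use dis f(2) cp(1) in blast)
    show "v \<in> K'" by (rule reach_closed_mem[OF r u' cp'(1) cp'(3)])
  qed
  then have KK: "K' = K" using sub by blast
  have "S' = S" using nbr_eq[OF G p] nbr_eq[OF G p'] KK by simp
  then show "S' = S \<and> K' = K" using KK by simp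
qed

lemma part3a:
  assumes G: "graph V E" and deg: "\<forall>v\<in>V. 3 * k \<le> 2 * degree V E v + 1"
    and k1: "\<forall>T. min_separator V E T \<longrightarrow> card T \<le> k"
    and P0: "(S, K) \<in> P0 V E" and ms: "min_separator V E S'"
  shows "S' \<inter> K = {}"
proof -
  have p: "(S, K) \<in> P V E" using P0 by (simp add: P0_def)
  note f = P_facts[OF G p]
  have "\<not> connected_on E (V - S')" using ms by (simp add: min_separator_def separator_def)
  then obtain u where uW: "u \<in> V - S'" unfolding connected_on_def by blast
  define M where "M = {v. reach E (V - S') u v}"
  have compM: "component E (V - S') M" unfolding M_def by (rule comp_of[OF uW])
  have pM: "(S', M) \<in> P V E" using ms compM by (simp add: P_def)
  have MV: "M \<subseteq> V - S'" using comp_props[OF G compM] by blast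
  have KS: "K \<inter> S = {}" using f(3) by (auto simp: closedS_def)
  have "K \<subseteq> M \<or> (K \<union> S) \<inter> (M \<union> S') = S \<inter> S'" by (rule part1[OF G deg k1 P0 pM])
  then show ?thesis
  proof
    assume "K \<subseteq> M" then show ?thesis using MV by blast
  next
    assume h: "(K \<union> S) \<inter> (M \<union> S') = S \<inter> S'"
    have "S' \<inter> K \<subseteq> (K \<union> S) \<inter> (M \<union> S')" by blast
    then have "S' \<inter> K \<subseteq> S" using h by blast
    then show ?thesis using KS by blast
  qed
qed

theorem lemma3:
  fixes V :: "'a set" and E :: "'a \<Rightarrow> 'a \<Rightarrow> bool" and k :: nat
  assumes "graph V E" and "k \<ge> 1"
    and "\<not> k_connected V E (k + 1)"
    and "\<forall>v\<in>V. real (degree V E v) \<ge> (3 * real k - 1) / 2"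
  shows "(\<forall>S K S' K'. (S, K) \<in> P0 V E \<and> (S', K') \<in> P V E \<and> (S, K) \<noteq> (S', K') \<longrightarrow>
            K \<subseteq> K' \<or> (K \<union> S) \<inter> (K' \<union> S') = S \<inter> S')
       \<and> (\<forall>S K S' K'. (S, K) \<in> P0 V E \<and> (S', K') \<in> P0 V E \<and> (S, K) \<noteq> (S', K') \<longrightarrow>
            (K \<union> S) \<inter> (K' \<union> S') = S \<inter> S')
       \<and> (\<forall>S K. (S, K) \<in> P V E \<longrightarrow>
            ((S, K) \<in> P0 V E \<longleftrightarrow> \<not> (\<exists>S'. min_separator V E S' \<and> S' \<inter> K \<noteq> {})))"
proof -
  note G = assms(1)
  have deg: "\<forall>v\<in>V. 3 * k \<le> 2 * degree V E v + 1"
  proof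
    fix v assume "v \<in> V"
    then have "(3 * real k - 1) / 2 \<le> real (degree V E v)" using assms(4) by blast
    then have "real (3 * k) \<le> real (2 * degree V E v + 1)" by simp
    then show "3 * k \<le> 2 * degree V E v + 1" by (simp only: of_nat_le_iff)
  qed
  have k1: "\<forall>T. min_separator V E T \<longrightarrow> card T \<le> k"
    using kappa_le[OF G assms(3)] by blast
  have one: "\<forall>S K S' K'. (S, K) \<in> P0 V E \<and> (S', K') \<in> P V E \<longrightarrow>
            K \<subseteq> K' \<or> (K \<union> S) \<inter> (K' \<union> S') = S \<inter> S'"
    using part1[OF G deg k1] by blast
  have two: "\<forall>S K S' K'. (S, K) \<in> P0 V E \<and> (S', K') \<in> P0 V E \<and> (S, K) \<noteq> (S', K') \<longrightarrow>
            (K \<union> S) \<inter> (K' \<union> S') = S \<inter> S'"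
  proof (intro allI impI)
    fix S K S' K'
    assume a: "(S, K) \<in> P0 V E \<and> (S', K') \<in> P0 V E \<and> (S, K) \<noteq> (S', K')"
    have pS: "(S, K) \<in> P V E" using a by (simp add: P0_def)
    have "(S', K') \<in> P V E" using a by (simp add: P0_def)
    then have "K \<subseteq> K' \<or> (K \<union> S) \<inter> (K' \<union> S') = S \<inter> S'" using part1[OF G deg k1] a by blast
    moreover have "\<not> K \<subseteq> K'"
    proof
      assume "K \<subseteq> K'"
      then have "(S, K) = (S', K')" using a pS unfolding P0_def by blast
      then show False using a by blast
    qed
    ultimately show "(K \<union> S) \<inter> (K' \<union> S') = S \<inter> S'" by blast
  qed
  have three: "\<forall>S K. (S, K) \<in> P V E \<longrightarrow>
            ((S, K) \<in> P0 V E \<longleftrightarrow> \<not> (\<exists>S'. min_separator V E S' \<and> S' \<inter> K \<noteq> {}))"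
  proof (intro allI impI)
    fix S K assume p: "(S, K) \<in> P V E"
    show "(S, K) \<in> P0 V E \<longleftrightarrow> \<not> (\<exists>S'. min_separator V E S' \<and> S' \<inter> K \<noteq> {})"
    proof
      assume "(S, K) \<in> P0 V E"
      then show "\<not> (\<exists>S'. min_separator V E S' \<and> S' \<inter> K \<noteq> {})"
        using part3a[OF G deg k1] by blast
    next
      assume "\<not> (\<exists>S'. min_separator V E S' \<and> S' \<inter> K \<noteq> {})"
      then show "(S, K) \<in> P0 V E" by (rule part3b[OF G p])
    qed
  qed
  have one': "\<forall>S K S' K'. (S, K) \<in> P0 V E \<and> (S', K') \<in> P V E \<and> (S, K) \<noteq> (S', K') \<longrightarrow>
            K \<subseteq> K' \<or> (K \<union> S) \<inter> (K' \<union> S') = S \<inter> S'"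
    using one by blast
  show ?thesis using one' two three by (intro conjI)
qed

end
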